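(* Let $\Omega$ be a causal order on a finite set $E$ and $\underline I=(I_\omega)_{\omega\in E}$ a family of non-empty finite sets. The space of input histories $\mathrm{Hist}(\Omega,\underline I)$ is tight.
   Context: A causal order on $E$ is a preorder $\le_\Omega$; $\downarrow\omega=\{\xi:\xi\le_\Omega\omega\}$. $\mathrm{Hist}(\Omega,\underline I)=\bigcup_{\xi\in E}\prod_{\omega\in\downarrow\xi}I_\omega$, a set of partial functions ordered by restriction ($f\le g$ iff $\mathrm{dom}(f)\subseteq\mathrm{dom}(g)$ and $g|_{\mathrm{dom}(f)}=f$). Compatible = agreeing on common domain; compatible $\mathcal F$ has join $\bigvee\mathcal F$ (union). For a space $\Theta$: $\mathrm{Ext}(\Theta)=\{\bigvee\mathcal F:\emptyset\ne\mathcal F\subseteq\Theta\text{ compatible}\}$, $\mathrm{tips}_\Theta(h)=\mathrm{dom}(h)\setminus\bigcup\{\mathrm{dom}(k):k\in\mathrm{Ext}(\Theta),k<h\}$. $\Theta$ is tight if for every $k\in\mathrm{Ext}(\Theta)$ and every $\omega\in\mathrm{dom}(k)$ there is a unique $h\in\Theta$ with $h\le k$ and $\omega\in\mathrm{tips}_\Theta(h)$. *)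

theory Defs
  imports Main
begin

text \<open>Partial functions are modelled as maps \<open>'e \<rightharpoonup> 'i\<close>; the restriction order
  \<open>f \<le> g\<close> is \<open>f \<subseteq>\<^sub>m g\<close>.\<close>

definition causal_order :: "'e set \<Rightarrow> ('e \<Rightarrow> 'e \<Rightarrow> bool) \<Rightarrow> bool" where
  "causal_order E le \<longleftrightarrow> (\<forall>x\<in>E. le x x) \<and>
     (\<forall>x\<in>E. \<forall>y\<in>E. \<forall>z\<in>E. le x y \<longrightarrow> le y z \<longrightarrow> le x z)"

definition down :: "'e set \<Rightarrow> ('e \<Rightarrow> 'e \<Rightarrow> bool) \<Rightarrow> 'e \<Rightarrow> 'e set" where
  "down E le w = {x\<in>E. le x w}"

definition Hist :: "'e set \<Rightarrow> ('e \<Rightarrow> 'e \<Rightarrow> bool) \<Rightarrow> ('e \<Rightarrow> 'i set) \<Rightarrow> ('e \<rightharpoonup> 'i) set" where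
  "Hist E le I = {f. \<exists>\<xi>\<in>E. dom f = down E le \<xi> \<and>
                       (\<forall>w\<in>down E le \<xi>. \<exists>i\<in>I w. f w = Some i)}"

definition map_less :: "('e \<rightharpoonup> 'i) \<Rightarrow> ('e \<rightharpoonup> 'i) \<Rightarrow> bool" where
  "map_less f g \<longleftrightarrow> f \<subseteq>\<^sub>m g \<and> f \<noteq> g"

definition compatible :: "('e \<rightharpoonup> 'i) set \<Rightarrow> bool" where
  "compatible F \<longleftrightarrow> (\<forall>f\<in>F. \<forall>g\<in>F. \<forall>x\<in>dom f \<inter> dom g. f x = g x)"

definition mjoin :: "('e \<rightharpoonup> 'i) set \<Rightarrow> ('e \<rightharpoonup> 'i)" where
  "mjoin F = (\<lambda>x. if \<exists>f\<in>F. x \<in> dom f then (SOME f. f \<in> F \<and> x \<in> dom f) x else None)"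

definition Ext :: "('e \<rightharpoonup> 'i) set \<Rightarrow> ('e \<rightharpoonup> 'i) set" where
  "Ext \<Theta> = {mjoin F | F. F \<noteq> {} \<and> F \<subseteq> \<Theta> \<and> compatible F}"

definition tips :: "('e \<rightharpoonup> 'i) set \<Rightarrow> ('e \<rightharpoonup> 'i) \<Rightarrow> 'e set" where
  "tips \<Theta> h = dom h - \<Union>{dom k | k. k \<in> Ext \<Theta> \<and> map_less k h}"

definition tight :: "('e \<rightharpoonup> 'i) set \<Rightarrow> bool" where
  "tight \<Theta> \<longleftrightarrow> (\<forall>k\<in>Ext \<Theta>. \<forall>w\<in>dom k. \<exists>!h. h \<in> \<Theta> \<and> h \<subseteq>\<^sub>m k \<and> w \<in> tips \<Theta> h)"

end

theory Submission
  imports Defs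
begin

lemma mjoin_eq:
  assumes "compatible F" "f \<in> F" "x \<in> dom f"
  shows "mjoin F x = f x"
proof -
  have "\<exists>f\<in>F. x \<in> dom f" using assms by blast
  hence "mjoin F x = (SOME f. f \<in> F \<and> x \<in> dom f) x" unfolding mjoin_def by simp
  also have "\<dots> = f x"
    by (rule someI2[of "\<lambda>f. f \<in> F \<and> x \<in> dom f" f]) (use assms in \<open>auto simp: compatible_def\<close>)
  finally show ?thesis .
qed

lemma mjoin_dom:
  assumes "x \<in> dom (mjoin F)"
  shows "\<exists>f\<in>F. x \<in> dom f"
  using assms unfolding mjoin_def by (auto split: if_splits)

lemma mjoin_sub:
  assumes "compatible F" "f \<in> F"
  shows "f \<subseteq>\<^sub>m mjoin F"
  using mjoin_eq[OF assms] unfolding map_le_def by auto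

lemma mjoin_single: "mjoin {h} = h"
proof
  fix x show "mjoin {h} x = h x"
  proof (cases "x \<in> dom h")
    case True thus ?thesis using mjoin_eq[of "{h}" h x] unfolding compatible_def by auto
  next
    case False thus ?thesis unfolding mjoin_def by (auto simp: domIff)
  qed
qed

lemma Hist_Ext: "h \<in> \<Theta> \<Longrightarrow> h \<in> Ext \<Theta>"
proof -
  assume "h \<in> \<Theta>"
  hence "{h} \<noteq> {} \<and> {h} \<subseteq> \<Theta> \<and> compatible {h}" unfolding compatible_def by simp
  moreover have "h = mjoin {h}" by (simp add: mjoin_single)
  ultimately show ?thesis unfolding Ext_def by blast
qed

lemma down_trans:
  assumes "causal_order E le" "w \<in> down E le \<xi>" "\<xi> \<in> E"
  shows "down E le w \<subseteq> down E le \<xi>"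
proof
  fix x assume "x \<in> down E le w"
  hence "x \<in> E" "le x w" unfolding down_def by auto
  moreover have "w \<in> E" "le w \<xi>" using assms(2) unfolding down_def by auto
  ultimately have "le x \<xi>" using assms(1,3) unfolding causal_order_def by blast
  thus "x \<in> down E le \<xi>" using \<open>x \<in> E\<close> unfolding down_def by simp
qed

lemma down_self:
  assumes "causal_order E le" "w \<in> E"
  shows "w \<in> down E le w"
  using assms unfolding causal_order_def down_def by blast

lemma map_le_eq_dom:
  assumes "f \<subseteq>\<^sub>m g" "dom g \<subseteq> dom f"
  shows "f = g"
proof
  fix x show "f x = g x"
  proof (cases "x \<in> dom f")
    case True thus ?thesis using assms(1) unfolding map_le_def by blast
  next
    case False
    hence "x \<notin> dom g" using assms(2) by blast
    thus ?thesis using False by (simp add: domIff)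
  qed
qed

theorem proposition23:
  fixes E :: "'e set" and le :: "'e \<Rightarrow> 'e \<Rightarrow> bool" and I :: "'e \<Rightarrow> 'i set"
  assumes "finite E"
    and "causal_order E le"
    and "\<And>w. w \<in> E \<Longrightarrow> I w \<noteq> {} \<and> finite (I w)"
  shows "tight (Hist E le I)"
  unfolding tight_def
proof (intro ballI)
  note co = assms(2)
  fix k w
  assume kE: "k \<in> Ext (Hist E le I)" and wk: "w \<in> dom k"
  from kE have "\<exists>F. k = mjoin F \<and> F \<noteq> {} \<and> F \<subseteq> Hist E le I \<and> compatible F"
    unfolding Ext_def by simp
  then obtain F where F: "F \<noteq> {}" "F \<subseteq> Hist E le I" "compatible F" and kF: "k = mjoin F"
    by (elim exE conjE)
  have "w \<in> dom (mjoin F)" using wk kF by simp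
  from mjoin_dom[OF this] obtain f where fF: "f \<in> F" and wf: "w \<in> dom f" by (elim bexE)
  have "f \<in> Hist E le I" using fF F(2) by blast
  then obtain \<xi> where xi: "\<xi> \<in> E" "dom f = down E le \<xi>"
    and fv: "\<forall>x\<in>down E le \<xi>. \<exists>i\<in>I x. f x = Some i"
    unfolding Hist_def by blast
  have fk: "f \<subseteq>\<^sub>m k" using mjoin_sub[OF F(3) fF] kF by simp
  have wE: "w \<in> E" using wf xi unfolding down_def by auto
  have dsub: "down E le w \<subseteq> dom f" using down_trans[OF co _ xi(1)] wf xi(2) by simp
  define h where "h = k |` down E le w"
  have "down E le w \<subseteq> dom k" using dsub fk map_le_implies_dom_le by blast
  hence domh: "dom h = down E le w" unfolding h_def by auto
  have hk: "h \<subseteq>\<^sub>m k" unfolding h_def map_le_def by simp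
  have hH: "h \<in> Hist E le I"
    unfolding Hist_def
  proof (rule CollectI, rule bexI[of _ w], intro conjI ballI)
    show "dom h = down E le w" by (fact domh)
    fix x assume x: "x \<in> down E le w"
    then have "x \<in> dom f" using dsub by blast
    then have "h x = f x" using fk x unfolding h_def map_le_def by simp
    moreover have "x \<in> down E le \<xi>" using x dsub xi(2) by blast
    ultimately show "\<exists>i\<in>I x. h x = Some i" using fv by simp
  qed (fact wE)
  have key: "g = h" if gH: "g \<in> Hist E le I" and gh: "g \<subseteq>\<^sub>m h" and wg: "w \<in> dom g" for g
  proof -
    from gH obtain \<zeta> where z: "\<zeta> \<in> E" "dom g = down E le \<zeta>" unfolding Hist_def by blast
    have "down E le w \<subseteq> dom g" using down_trans[OF co _ z(1)] wg z(2) by simp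
    then have "dom h \<subseteq> dom g" using domh by simp
    then show ?thesis by (rule map_le_eq_dom[OF gh])
  qed
  have wtips: "w \<in> tips (Hist E le I) h"
    unfolding tips_def
  proof (rule DiffI)
    show "w \<in> dom h" using domh down_self[OF co wE] by simp
    show "w \<notin> \<Union> {dom k' |k'. k' \<in> Ext (Hist E le I) \<and> map_less k' h}"
    proof
      assume "w \<in> \<Union> {dom k' |k'. k' \<in> Ext (Hist E le I) \<and> map_less k' h}"
      then obtain k' where k': "k' \<in> Ext (Hist E le I)" "map_less k' h" "w \<in> dom k'" by auto
      from k'(1) have "\<exists>F. k' = mjoin F \<and> F \<noteq> {} \<and> F \<subseteq> Hist E le I \<and> compatible F"
        unfolding Ext_def by simp
      then obtain F' where F': "F' \<subseteq> Hist E le I" "compatible F'" and kF': "k' = mjoin F'"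
        by (elim exE conjE)
      have "w \<in> dom (mjoin F')" using k'(3) kF' by simp
      from mjoin_dom[OF this] obtain g where gF: "g \<in> F'" and wg: "w \<in> dom g" by (elim bexE)
      have gk': "g \<subseteq>\<^sub>m k'" using mjoin_sub[OF F'(2) gF] kF' by simp
      have "k' \<subseteq>\<^sub>m h" "k' \<noteq> h" using k'(2) unfolding map_less_def by auto
      have "g \<subseteq>\<^sub>m h" using gk' \<open>k' \<subseteq>\<^sub>m h\<close> map_le_trans by blast
      then have "g = h" using key gF F'(1) wg by blast
      then have "k' = h" using gk' \<open>k' \<subseteq>\<^sub>m h\<close> map_le_antisym by blast
      then show False using \<open>k' \<noteq> h\<close> by simp
    qed
  qed
  show "\<exists>!h. h \<in> Hist E le I \<and> h \<subseteq>\<^sub>m k \<and> w \<in> tips (Hist E le I) h"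
  proof (rule ex1I[of _ h])
    show "h \<in> Hist E le I \<and> h \<subseteq>\<^sub>m k \<and> w \<in> tips (Hist E le I) h" using hH hk wtips by simp
    fix h' assume h': "h' \<in> Hist E le I \<and> h' \<subseteq>\<^sub>m k \<and> w \<in> tips (Hist E le I) h'"
    have h'k: "h' \<subseteq>\<^sub>m k" and h't: "w \<in> tips (Hist E le I) h'" using h' by simp_all
    from h' obtain \<zeta> where z: "\<zeta> \<in> E" "dom h' = down E le \<zeta>" unfolding Hist_def by blast
    have wh': "w \<in> dom h'" using h't unfolding tips_def by blast
    have dsub': "down E le w \<subseteq> dom h'" using down_trans[OF co _ z(1)] wh' z(2) by simp
    have hh': "h \<subseteq>\<^sub>m h'"
      unfolding map_le_def
    proof (intro ballI)
      fix x assume "x \<in> dom h"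
      then have x: "x \<in> down E le w" using domh by simp
      then have "h x = k x" unfolding h_def by simp
      also have "\<dots> = h' x" using h'k dsub' x unfolding map_le_def by (metis subsetD)
      finally show "h x = h' x" .
    qed
    show "h' = h"
    proof (rule ccontr)
      assume "h' \<noteq> h"
      then have "map_less h h'" using hh' unfolding map_less_def by auto
      then have "w \<in> \<Union> {dom k' |k'. k' \<in> Ext (Hist E le I) \<and> map_less k' h'}"
        using Hist_Ext[OF hH] domh down_self[OF co wE] by blast
      then show False using h't unfolding tips_def by blast
    qed
  qed
qed

end
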